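(* Let $n\ge 2$ be a power of $2$, $m=2n$, $R=\mathbb{Z}[\zeta_m]\cong\mathbb{Z}[x]/(x^n+1)$, and let $q$ be a prime with $q\equiv 1 \pmod 4$. Let $\mathfrak{a}\mid qR$ be an ideal with $R/\mathfrak{a}\cong\mathbb{F}_{q^k}$, and let $\rho:R_q=R/qR\to R/\mathfrak{a}$ be the quotient map. Suppose the error distribution $\chi$ on $R_q$ is formed on the $\zeta$-basis with coefficients distributed according to a distribution $\chi_0$ on $\mathbb{F}_q$. Then $\rho(\zeta^k)\in\mathbb{F}_q$, the elements $1,\rho(\zeta),\dots,\rho(\zeta)^{k-1}$ form an $\mathbb{F}_q$-basis of $\mathbb{F}_{q^k}$, and the pushforward distribution $\chi':=\rho(\chi)$ on $\mathbb{F}_{q^k}$ is formed on this $\zeta$-basis with independent coefficients, each distributed according to $\chi_0'$, where $\chi_0'$ is the distribution of $\sum_{i=0}^{n/k-1}\rho(\zeta^k)^i X_i$ with $X_0,\dots,X_{n/k-1}$ independent and each distributed according to $\chi_0$.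
   Context: $\zeta=\zeta_m$ denotes a primitive $m$-th root of unity in $R$ and also its image in any quotient of $R$. The $\zeta$-basis of $R_q$ over $\mathbb{F}_q$ is $1,\zeta,\dots,\zeta^{n-1}$; for a quotient $R/\mathfrak{a}$ of $\mathbb{F}_q$-dimension $d$ the $\zeta$-basis is $1,\zeta,\dots,\zeta^{d-1}$. A distribution $\chi$ on a ring with $\zeta$-basis $1,\zeta,\ldots,\zeta^{d-1}$ is "formed on the $\zeta$-basis with coefficients distributed according to $\chi_0$" if a sample is $\sum_{i=0}^{d-1} e_i\zeta^i$ with $e_0,\dots,e_{d-1}$ independent and each distributed according to $\chi_0$. *)

theory Defs
  imports "HOL-Probability.Product_PMF" "HOL-Computational_Algebra.Polynomial_Factorial"
begin

text \<open>R_q = F_q[x]/(x^n+1); elements are represented by reduced polynomials (mod x^n+1),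
  zeta is the class of x.\<close>

definition xn1 :: "nat \<Rightarrow> 'a::field poly" where
  "xn1 n = monom 1 n + 1"

definition zeta_pow_Rq :: "nat \<Rightarrow> nat \<Rightarrow> 'a::field poly" where
  "zeta_pow_Rq n i = [:0, 1:] ^ i mod xn1 n"

definition formed_on_basis :: "nat \<Rightarrow> (nat \<Rightarrow> 'a::field poly) \<Rightarrow> 'a pmf \<Rightarrow> 'a poly pmf" where
  "formed_on_basis d b chi0 =
     map_pmf (\<lambda>e. \<Sum>i<d. smult (e i) (b i)) (Pi_pmf {..<d} 0 (\<lambda>_. chi0))"

end

theory Submission
  imports Defs
begin


lemma fermat_field:
  fixes a :: "'a::{field,finite}"
  shows "a ^ CARD('a) = a"
proof (cases "a = 0")
  case True thus ?thesis by simp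
next
  case False
  define S where "S = UNIV - {0::'a}"
  have fin: "finite S" by (simp add: S_def)
  have inj: "inj_on ((*) a) S" using False by (auto simp: inj_on_def)
  have img: "(*) a ` S = S"
  proof
    show "(*) a ` S \<subseteq> S" using False by (auto simp: S_def)
    show "S \<subseteq> (*) a ` S"
    proof
      fix b assume "b \<in> S"
      hence "b = a * (inverse a * b)" "inverse a * b \<in> S" using False by (auto simp: S_def)
      thus "b \<in> (*) a ` S" by blast
    qed
  qed
  have "prod id S = prod id ((*) a ` S)" using img by simp
  also have "\<dots> = prod ((*) a) S" using prod.reindex[OF inj] by simp
  also have "\<dots> = a ^ card S * prod id S" by (simp add: prod.distrib)
  finally have eq: "prod id S = a ^ card S * prod id S" .
  have "prod id S \<noteq> 0" using fin by (auto simp: S_def)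
  hence "a ^ card S = 1" using eq by (metis mult_cancel_right1)
  moreover have "card S = CARD('a) - 1" by (simp add: S_def card_Diff_subset)
  moreover have "CARD('a) = Suc (CARD('a) - 1)" by simp
  ultimately show ?thesis by (metis mult.right_neutral power_Suc)
qed

lemma of_nat_card_zero: "(of_nat CARD('a) :: 'a::{comm_ring_1,finite}) = 0"
proof -
  have bij: "bij ((+) (1::'a))" by (rule bij_betw_byWitness[where f'="\<lambda>x. x - 1"]) auto
  have "sum id (UNIV::'a set) = sum id ((+) 1 ` UNIV)" using bij by (simp add: bij_def)
  also have "\<dots> = sum (id \<circ> (+) 1) UNIV" using bij by (intro sum.reindex) (simp add: bij_def)
  also have "\<dots> = sum ((+) 1) UNIV" by simp
  also have "\<dots> = of_nat CARD('a) + sum id UNIV" by (simp add: sum.distrib)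
  finally show ?thesis by simp
qed

lemma two_ne_zero_field:
  assumes "CARD('a::{field,finite}) = q" "odd q"
  shows "(2::'a) \<noteq> 0"
proof
  assume 2: "(2::'a) = 0"
  obtain t where t: "q = 2*t + 1" using assms(2) oddE by blast
  have "(of_nat q :: 'a) = 0" using of_nat_card_zero[where 'a='a] assms(1) by simp
  hence "(of_nat (2*t+1)::'a) = 0" using t by simp
  hence "2 * of_nat t + (1::'a) = 0" by (simp add: add.commute)
  thus False using 2 by simp
qed

lemma pow2_odd_decomp: "(m::nat) > 0 \<Longrightarrow> \<exists>v w. odd w \<and> m = 2^v * w"
proof (induction m rule: less_induct)
  case (less m)
  show ?case
  proof (cases "even m")
    case True
    then obtain m' where m': "m = 2*m'" by blast
    with less.prems have "m' < m" "m' > 0" by auto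
    from less.IH[OF this] obtain v w where "odd w" "m' = 2^v * w" by blast
    thus ?thesis using m' by (intro exI[of _ "Suc v"] exI[of _ w]) auto
  next
    case False thus ?thesis by (intro exI[of _ 0] exI[of _ m]) auto
  qed
qed

lemma lte_pow2:
  fixes q :: int assumes "q mod 4 = 1"
  shows "\<exists>ob. odd ob \<and> q^(2^v) - 1 = 2^v * (q - 1) * ob"
proof (induction v)
  case 0 thus ?case by (intro exI[of _ 1]) simp
next
  case (Suc v)
  then obtain ob where ob: "odd ob" "q^(2^v) - 1 = 2^v * (q - 1) * ob" by blast
  have "q^(2^v) mod 4 = (q mod 4)^(2^v) mod 4" by (rule power_mod[symmetric])
  hence "q^(2^v) mod 4 = 1" using assms by simp
  hence "(q^(2^v) + 1) mod 4 = 2" by (simp add: mod_add_left_eq[symmetric])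
  moreover have "q^(2^v) + 1 = 4 * ((q^(2^v) + 1) div 4) + (q^(2^v) + 1) mod 4"
    by (rule mult_div_mod_eq[symmetric])
  ultimately have "q^(2^v) + 1 = 2 * (2 * ((q^(2^v) + 1) div 4) + 1)" by simp
  then obtain ob' where ob': "q^(2^v) + 1 = 2 * ob'" "odd ob'" by fastforce
  have "q^(2^Suc v) - 1 = (q^(2^v) - 1) * (q^(2^v) + 1)"
    by (simp add: power_mult algebra_simps power2_eq_square)
  also have "\<dots> = 2^Suc v * (q - 1) * (ob * ob')" using ob ob' by simp
  finally have "q^(2^Suc v) - 1 = 2^Suc v * (q - 1) * (ob * ob')" .
  moreover have "odd (ob * ob' :: int)" using ob ob' by simp
  ultimately show ?case by blast
qed

lemma odd_geom_sum: fixes Q :: int assumes "odd Q" shows "odd (\<Sum>i<w. Q^i) \<longleftrightarrow> odd w"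
  by (induction w) (auto simp: assms)

lemma lte:
  fixes q :: int and m :: nat
  assumes "q mod 4 = 1" "m > 0" "2^(e+1) dvd q^m - 1" "q - 1 = 2^s * u" "odd u"
  shows "2^(e+1-s) dvd m"
proof -
  obtain v w where vw: "odd w" "m = 2^v * w" using pow2_odd_decomp assms(2) by blast
  obtain ob where ob: "odd ob" "q^(2^v) - 1 = 2^v * (q - 1) * ob" using lte_pow2 assms(1) by blast
  define Q where "Q = q^(2^v)"
  have "odd q" using assms(1) by presburger
  hence Qodd: "odd Q" unfolding Q_def by simp
  have "q^m - 1 = Q^w - 1" by (simp add: Q_def vw power_mult)
  also have "\<dots> = (Q - 1) * (\<Sum>i<w. Q^i)" by (rule power_diff_1_eq)
  also have "\<dots> = 2^(v+s) * (u * ob * (\<Sum>i<w. Q^i))"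
    unfolding Q_def ob(2) assms(4) power_add by (simp add: ac_simps)
  finally have eq: "q^m - 1 = 2^(v+s) * (u * ob * (\<Sum>i<w. Q^i))" .
  have oddp: "odd (u * ob * (\<Sum>i<w. Q^i))" using odd_geom_sum[OF Qodd] vw ob assms(5) by simp
  have cop: "coprime ((2::int)^(e+1)) (u * ob * (\<Sum>i<w. Q^i))" using oddp by simp
  have "(2::int)^(e+1) dvd 2^(v+s)" using coprime_dvd_mult_left_iff[OF cop] assms(3) eq by simp
  hence "e + 1 \<le> v + s" using dvd_power_iff[of "2::int" "e+1" "v+s"] by simp
  hence "(2::nat)^(e+1-s) dvd 2^v" by (simp add: le_imp_power_dvd)
  thus ?thesis using vw by simp
qed



lemma prime_elem_dvd_prod_iff':
  fixes p :: "'b::comm_semiring_1"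
  assumes "prime_elem p" "finite A"
  shows "p dvd prod g A \<longleftrightarrow> (\<exists>x\<in>A. p dvd g x)"
  using assms(2)
proof (induction A rule: finite_induct)
  case empty thus ?case using assms(1) by (simp add: prime_elem_not_unit)
next
  case (insert x A) thus ?case using assms(1) by (simp add: prime_elem_dvd_mult_iff)
qed

lemma pcompose_power_left: "pcompose (p ^ n) r = (pcompose p r) ^ n"
  by (induction n) (simp_all add: pcompose_mult pcompose_1)

lemma coeff_sum_monom:
  "coeff (\<Sum>j<d. monom (c j) j) i = (if i < d then c i else 0)"
  by (simp add: coeff_sum coeff_monom)

lemma coeffs_bij:
  assumes "d \<ge> 1"
  shows "bij_betw (\<lambda>c. \<Sum>j<d. monom (c j) j) ({..<d} \<rightarrow>\<^sub>E (UNIV::'a::comm_monoid_add set))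
           {p::'a poly. degree p < d}"
  unfolding bij_betw_def
proof (intro conjI)
  show "inj_on (\<lambda>c. \<Sum>j<d. monom (c j) j) ({..<d} \<rightarrow>\<^sub>E (UNIV::'a set))"
  proof (rule inj_onI)
    fix c c' assume c: "c \<in> {..<d} \<rightarrow>\<^sub>E (UNIV::'a set)" and c': "c' \<in> {..<d} \<rightarrow>\<^sub>E UNIV"
      and eq: "(\<Sum>j<d. monom (c j) j) = (\<Sum>j<d. monom (c' j) j)"
    show "c = c'"
    proof (rule PiE_ext[OF c c'])
      fix i assume "i \<in> {..<d}"
      thus "c i = c' i" using arg_cong[OF eq, of "\<lambda>p. coeff p i"] by (simp add: coeff_sum_monom)
    qed
  qed
  show "(\<lambda>c. \<Sum>j<d. monom (c j) j) ` ({..<d} \<rightarrow>\<^sub>E (UNIV::'a set)) = {p. degree p < d}"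
  proof
    show "(\<lambda>c. \<Sum>j<d. monom (c j) j) ` ({..<d} \<rightarrow>\<^sub>E UNIV) \<subseteq> {p::'a poly. degree p < d}"
    proof clarify
      fix c :: "nat \<Rightarrow> 'a"
      have "degree (\<Sum>j<d. monom (c j) j) \<le> d - 1"
        by (rule degree_le) (auto simp: coeff_sum_monom)
      thus "degree (\<Sum>j<d. monom (c j) j) < d" using assms by linarith
    qed
    show "{p::'a poly. degree p < d} \<subseteq> (\<lambda>c. \<Sum>j<d. monom (c j) j) ` ({..<d} \<rightarrow>\<^sub>E UNIV)"
    proof
      fix p :: "'a poly" assume "p \<in> {p. degree p < d}"
      hence dp: "degree p < d" by simp
      have "p = (\<Sum>j<d. monom (restrict (coeff p) {..<d} j) j)"
      proof (rule poly_eqI)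
        fix i show "coeff p i = coeff (\<Sum>j<d. monom (restrict (coeff p) {..<d} j) j) i"
          using dp by (auto simp: coeff_sum_monom coeff_eq_0)
      qed
      moreover have "restrict (coeff p) {..<d} \<in> {..<d} \<rightarrow>\<^sub>E UNIV" by simp
      ultimately show "p \<in> (\<lambda>c. \<Sum>j<d. monom (c j) j) ` ({..<d} \<rightarrow>\<^sub>E UNIV)" by blast
    qed
  qed
qed

lemma card_deg_less:
  assumes "d \<ge> 1"
  shows "finite {p::'a::{comm_monoid_add,finite} poly. degree p < d}" "card {p::'a poly. degree p < d} = CARD('a)^d"
proof -
  have fin: "finite ({..<d} \<rightarrow>\<^sub>E (UNIV::'a set))" by (simp add: finite_PiE)
  show "finite {p::'a poly. degree p < d}" using bij_betw_finite[OF coeffs_bij[OF assms]] fin by blast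
  have "card {p::'a poly. degree p < d} = card ({..<d} \<rightarrow>\<^sub>E (UNIV::'a set))"
    using bij_betw_same_card[OF coeffs_bij[OF assms, where 'a='a]] by simp
  also have "\<dots> = CARD('a)^d" by (simp add: card_PiE)
  finally show "card {p::'a poly. degree p < d} = CARD('a)^d" .
qed



lemma not_dvd_small:
  fixes f b :: "'a::field poly"
  assumes "b \<noteq> 0" "degree b < degree f"
  shows "\<not> f dvd b"
  using dvd_imp_degree_le[of f b] assms by linarith

lemma frob_unit:
  fixes f p :: "'a::{field,finite} poly"
  assumes irr: "irreducible f" and nd: "\<not> f dvd p"
  shows "p ^ (CARD('a) ^ degree f - 1) mod f = 1"
proof -
  define d where "d = degree f"
  have pr: "prime_elem f" using irr by (rule field_poly_irreducible_imp_prime)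
  have f0: "f \<noteq> 0" using irr by auto
  have "\<not> is_unit f" using irr by (simp add: irreducible_def)
  hence d1: "d \<ge> 1" using f0 is_unit_iff_degree unfolding d_def by fastforce
  define S where "S = {b::'a poly. b \<noteq> 0 \<and> degree b < d}"
  have eqS: "{b::'a poly. degree b < d} = insert 0 S" using d1 by (auto simp: S_def)
  have finS: "finite S" using card_deg_less(1)[OF d1, where 'a='a] eqS by simp
  have cardS: "card S = CARD('a)^d - 1"
    using card_deg_less(2)[OF d1, where 'a='a] eqS finS by (simp add: S_def)
  define a where "a = p mod f"
  have a0: "a \<noteq> 0" using nd by (simp add: a_def mod_eq_0_iff_dvd)
  have aS: "a \<in> S" using a0 degree_mod_less'[OF f0] unfolding S_def a_def d_def by auto
  have ndS: "\<not> f dvd b" if "b \<in> S" for b using that not_dvd_small unfolding S_def d_def by blast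
  define h where "h b = a * b mod f" for b
  have hS: "h b \<in> S" if "b \<in> S" for b
  proof -
    have "\<not> f dvd a * b" using ndS[OF aS] ndS[OF that] pr by (simp add: prime_elem_dvd_mult_iff)
    hence "h b \<noteq> 0" by (simp add: h_def mod_eq_0_iff_dvd)
    thus ?thesis using degree_mod_less'[OF f0] unfolding S_def h_def d_def by auto
  qed
  have inj: "inj_on h S"
  proof (rule inj_onI)
    fix b b' assume b: "b \<in> S" and b': "b' \<in> S" and eq: "h b = h b'"
    hence "f dvd a * b - a * b'" unfolding h_def by (simp add: mod_eq_dvd_iff)
    hence "f dvd a * (b - b')" by (simp add: right_diff_distrib)
    hence "f dvd b - b'" using ndS[OF aS] pr by (simp add: prime_elem_dvd_mult_iff)
    hence "b mod f = b' mod f" by (simp add: mod_eq_dvd_iff)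
    moreover have "b mod f = b" "b' mod f = b'" using b b' mod_poly_less unfolding S_def d_def by auto
    ultimately show "b = b'" by simp
  qed
  have img: "h ` S = S"
    by (rule card_subset_eq[OF finS]) (use hS in auto, simp add: card_image[OF inj])
  define P where "P = prod id S"
  have "P = prod id (h ` S)" using img by (simp add: P_def)
  also have "\<dots> = prod h S" using prod.reindex[OF inj] by simp
  finally have "P mod f = prod h S mod f" by simp
  also have "\<dots> = prod (\<lambda>b. a * b) S mod f" unfolding h_def by (rule mod_prod_eq)
  also have "prod (\<lambda>b. a * b) S = a ^ card S * P" by (simp add: prod.distrib P_def)
  finally have "f dvd P - a ^ card S * P" by (simp add: mod_eq_dvd_iff)
  hence "f dvd a ^ card S * P - P" by (metis dvd_minus_iff minus_diff_eq)
  hence "f dvd (a ^ card S - 1) * P" by (simp add: left_diff_distrib)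
  moreover have "\<not> f dvd P" unfolding P_def using prime_elem_dvd_prod_iff'[OF pr finS] ndS by auto
  ultimately have "f dvd a ^ card S - 1" using pr by (simp add: prime_elem_dvd_mult_iff)
  hence "a ^ card S mod f = 1 mod f" by (simp add: mod_eq_dvd_iff)
  also have "1 mod f = 1" using d1 by (intro mod_poly_less) (simp add: d_def)
  finally have "a ^ card S mod f = 1" .
  thus ?thesis unfolding a_def cardS d_def by (simp add: power_mod)
qed


lemma fermat_poly_id:
  "([:0,1:]::'a::{field,finite} poly) ^ CARD('a) - [:0,1:] = (\<Prod>c\<in>UNIV. [:-c,1:])"
proof -
  have "card {0::'a, 1} \<le> CARD('a)" by (rule card_mono) auto
  hence c2: "CARD('a) \<ge> 2" by simp
  have degR: "degree (\<Prod>c\<in>(UNIV::'a set). [:-c,1:]) = CARD('a)"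
    by (subst degree_prod_eq_sum_degree) auto
  have lcR: "lead_coeff (\<Prod>c\<in>(UNIV::'a set). [:-c,1:]) = 1" by (simp add: lead_coeff_prod)
  show ?thesis
  proof (rule poly_eqI_degree_lead_coeff[where n="CARD('a)" and A=UNIV])
    show "coeff (([:0,1:]::'a poly) ^ CARD('a) - [:0,1:]) CARD('a) = coeff (\<Prod>c\<in>(UNIV::'a set). [:-c,1:]) CARD('a)"
    proof -
      have d: "degree (([:0,1:]::'a poly) ^ CARD('a)) = CARD('a)" by (simp add: degree_power_eq)
      have "lead_coeff (([:0,1:]::'a poly) ^ CARD('a)) = 1" by (simp add: lead_coeff_power)
      hence e1: "coeff (([:0,1:]::'a poly) ^ CARD('a)) CARD('a) = 1" using d by simp
      have e2: "coeff ([:0,1:]::'a poly) CARD('a) = 0" using c2 by (intro coeff_eq_0) simp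
      have e3: "coeff (\<Prod>c\<in>(UNIV::'a set). [:-c,1:]) CARD('a) = 1" using lcR degR by simp
      show ?thesis using e1 e2 e3 by (simp add: coeff_diff)
    qed
    show "CARD('a) \<le> card (UNIV::'a set)" by simp
    show "degree (([:0,1:]::'a poly) ^ CARD('a) - [:0,1:]) \<le> CARD('a)"
      using c2 by (intro degree_diff_le) (auto simp: degree_linear_power[of 0, simplified])
    show "degree (\<Prod>c\<in>(UNIV::'a set). [:-c,1:]) \<le> CARD('a)" using degR by simp
    fix z :: 'a
    have "poly (\<Prod>c\<in>UNIV. [:-c,1:]) z = 0"
      by (simp add: poly_prod)
    thus "poly (([:0,1:]::'a poly) ^ CARD('a) - [:0,1:]) z = poly (\<Prod>c\<in>(UNIV::'a set). [:-c,1:]) z"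
      by (simp add: fermat_field)
  qed
qed

lemma frob_const:
  fixes f P :: "'a::{field,finite} poly"
  assumes irr: "irreducible f" and eq: "P ^ CARD('a) mod f = P mod f"
  shows "\<exists>c. P mod f = [:c:]"
proof -
  have pr: "prime_elem f" using irr by (rule field_poly_irreducible_imp_prime)
  have f0: "f \<noteq> 0" using irr by auto
  have "\<not> is_unit f" using irr by (simp add: irreducible_def)
  hence d1: "degree f \<ge> 1" using f0 is_unit_iff_degree by fastforce
  have "pcompose ([:0,1:] ^ CARD('a) - [:0,1:]) P = P ^ CARD('a) - P"
    by (simp add: pcompose_diff pcompose_power_left pcompose_pCons)
  also have "pcompose ([:0,1:] ^ CARD('a) - [:0,1:]) P = (\<Prod>c\<in>UNIV. P - [:c:])"
    unfolding fermat_poly_id by (simp add: pcompose_prod pcompose_pCons diff_conv_add_uminus add.commute minus_pCons)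
  finally have "f dvd (\<Prod>c\<in>UNIV. P - [:c:])" using eq by (simp add: mod_eq_dvd_iff)
  then obtain c where "f dvd P - [:c:]" using prime_elem_dvd_prod_iff'[OF pr, of "UNIV::'a set"] by auto
  hence "P mod f = [:c:] mod f" by (simp add: mod_eq_dvd_iff)
  also have "[:c:] mod f = [:c:]" using d1 by (intro mod_poly_less) simp
  finally show ?thesis by blast
qed



lemma xn1_eq: "xn1 n = ([:0,1:]::'a::field poly) ^ n + 1"
  by (simp add: xn1_def monom_altdef)

lemma pow_mod_one_mult:
  fixes f p :: "'a::field poly"
  assumes "p ^ N mod f = 1"
  shows "p ^ (N * c) mod f = 1"
proof -
  have "p ^ (N * c) mod f = ((p ^ N) mod f) ^ c mod f" by (simp add: power_mult power_mod)
  also have "\<dots> = 1 mod f" using assms by simp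
  also have "\<dots> = 1" using assms by (metis mod_mod_trivial)
  finally show ?thesis .
qed

lemma ord2:
  fixes f :: "'a::field poly"
  assumes n: "n = 2^e" and fd: "f dvd [:0,1:]^n + 1" and two: "(2::'a) \<noteq> 0"
    and d1: "degree f \<ge> 1" and j: "j > 0" and xj: "[:0,1:]^j mod f = 1"
  shows "2 * n dvd j"
proof (rule ccontr)
  assume nd: "\<not> 2 * n dvd j"
  obtain w u where wu: "odd u" "j = 2^w * u" using pow2_odd_decomp j by blast
  have "w \<le> e"
  proof (rule ccontr)
    assume "\<not> w \<le> e"
    hence "e + 1 \<le> w" by simp
    hence "2^(e+1) dvd (2::nat)^w" by (rule le_imp_power_dvd)
    hence "2 * n dvd j" using wu n by (simp add: dvd_mult2)
    thus False using nd by simp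
  qed
  have jn: "j * 2^(e - w) = n * u" using wu n \<open>w \<le> e\<close> by (simp add: power_add[symmetric])
  have "[:0,1:]^(j * 2^(e - w)) mod f = (1::'a poly)" by (rule pow_mod_one_mult[OF xj])
  hence A: "([:0,1:]^n)^u mod f = (1::'a poly)" using jn by (simp add: power_mult)
  have "[:0,1:]^n mod f = (-1::'a poly) mod f" using fd mod_eq_dvd_iff[of "[:0,1:]^n" f "-1::'a poly"] by simp
  hence "([:0,1:]^n)^u mod f = ((-1::'a poly) mod f)^u mod f" by (metis power_mod)
  also have "\<dots> = (-1::'a poly)^u mod f" by (rule power_mod)
  also have "\<dots> = -1 mod f" using wu by simp
  finally have "(1::'a poly) mod f = -1 mod f" using A d1 by (simp add: mod_poly_less)
  hence "f dvd 1 - (-1::'a poly)" by (subst (asm) mod_eq_dvd_iff)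
  hence "f dvd [:2:]" by (simp add: numeral_poly[symmetric])
  moreover have "[:2:] \<noteq> (0::'a poly)" using two by simp
  ultimately have "degree f \<le> degree ([:2:]::'a poly)" by (rule dvd_imp_degree_le)
  thus False using d1 by simp
qed



lemma structure_thm:
  fixes f :: "'a::{field,finite} poly"
  assumes n: "n = 2^e" and n2: "n \<ge> 2" and pq: "prime q" and q4: "q mod 4 = 1" and cq: "CARD('a) = q"
    and fd: "f dvd xn1 n" and irr: "irreducible f" and dk: "degree f = k"
  shows "k dvd n \<and> k < n \<and> k \<ge> 1 \<and> (\<exists>r. [:0,1:]^k mod f = [:r:])"
proof -
  define X where "X = ([:0,1:]::'a poly)"
  have fd': "f dvd X^n + 1" using fd by (simp add: xn1_eq X_def)
  have f0: "f \<noteq> 0" using irr by auto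
  have "\<not> is_unit f" using irr by (simp add: irreducible_def)
  hence k1: "k \<ge> 1" using f0 is_unit_iff_degree dk by fastforce
  have one: "1 mod f = (1::'a poly)" using k1 dk by (intro mod_poly_less) simp
  have e1: "e \<ge> 1" using n n2 by (cases e) auto
  have oddq: "odd q" using q4 by presburger
  have two: "(2::'a) \<noteq> 0" using two_ne_zero_field[OF cq oddq] .
  have "X^(2*n) - 1 = (X^n + 1) * (X^n - 1)" by (simp add: power_mult algebra_simps power2_eq_square mult.commute)
  hence "f dvd X^(2*n) - 1" using fd' by simp
  hence "X^(2*n) mod f = 1 mod f" by (subst mod_eq_dvd_iff)
  hence x2n: "X^(2*n) mod f = 1" using one by simp
  have q1: "q - 1 > 0" using prime_ge_2_nat[OF pq] by simp
  obtain s u where su: "odd u" "q - 1 = 2^s * u" using pow2_odd_decomp[OF q1] by blast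
  have s2: "s \<ge> 2"
  proof -
    have "4 dvd q - 1" using q4 by presburger
    hence "4 dvd 2^s * u" using su by simp
    moreover have "coprime ((2::nat)^2) u" using su(1) coprime_power_left_iff[of "2::nat" 2 u] by simp
    moreover have "(4::nat) = 2^2" by simp
    ultimately have "(2::nat)^2 dvd 2^s" by (metis coprime_dvd_mult_left_iff)
    thus ?thesis using dvd_power_iff_le[of 2 2 s] by simp
  qed
  define t where "t = e + 1 - s"
  define K where "K = (2::nat)^t"
  have K1: "K \<ge> 1" by (simp add: K_def)
  have "2 * n dvd K * (q - 1)"
  proof -
    have "2 * n = 2^(e+1)" using n by simp
    also have "\<dots> dvd 2^(t+s)" by (rule le_imp_power_dvd) (simp add: t_def)
    also have "\<dots> = K * 2^s" by (simp add: K_def power_add)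
    also have "\<dots> dvd K * (q - 1)" using su by simp
    finally show ?thesis .
  qed
  then obtain c where c: "K * (q - 1) = 2 * n * c" by blast
  have xk: "X^(K * (q - 1)) mod f = 1" unfolding c by (rule pow_mod_one_mult[OF x2n])
  have "(X^K)^q = X^K * X^(K * (q - 1))"
  proof -
    have "K * q = K + K * (q - 1)" using q1 by (cases q) auto
    thus ?thesis by (simp add: power_mult[symmetric] power_add)
  qed
  hence "(X^K)^q mod f = X^K * (X^(K * (q - 1)) mod f) mod f" by (simp add: mod_mult_right_eq)
  hence "(X^K)^CARD('a) mod f = X^K mod f" using xk cq by simp
  then obtain r where r: "X^K mod f = [:r:]" using frob_const[OF irr] by blast
  have "f dvd X^K - [:r:]"
  proof -
    have "[:r:] mod f = [:r:]" using k1 dk by (intro mod_poly_less) simp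
    thus ?thesis using r by (metis mod_eq_dvd_iff)
  qed
  moreover have "X^K - [:r:] \<noteq> 0"
  proof
    assume "X^K - [:r:] = 0"
    hence "coeff (X^K - [:r:]) K = 0" by simp
    moreover have "coeff (X^K) K = 1" by (simp add: X_def monom_altdef[symmetric, of 1, simplified] coeff_monom)
    moreover have "coeff [:r:] K = 0" using K1 by (cases K) auto
    ultimately show False by simp
  qed
  ultimately have "degree f \<le> degree (X^K - [:r:])" by (rule dvd_imp_degree_le)
  also have "\<dots> \<le> K" by (intro degree_diff_le) (auto simp: X_def degree_power_le[of "[:0,1:]" K, simplified] degree_linear_power[of 0, simplified])
  finally have kK: "k \<le> K" using dk by simp
  have nX: "\<not> f dvd X"
  proof
    assume "f dvd X"
    moreover have "X^n = X * X^(n-1)" using n2 by (simp add: power_eq_if)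
    ultimately have "f dvd X^n" by (metis dvd_mult2)
    hence "f dvd (X^n + 1) - X^n" using fd' by (intro dvd_diff) 
    hence "f dvd 1" by simp
    thus False using \<open>\<not> is_unit f\<close> by simp
  qed
  have "X ^ (CARD('a) ^ degree f - 1) mod f = 1" by (rule frob_unit[OF irr nX])
  hence xq: "X ^ (q^k - 1) mod f = 1" using cq dk by simp
  have qk: "q^k - 1 > 0" using one_less_power[of q k] q1 k1 by simp
  have "2 * n dvd q^k - 1" by (rule ord2[OF n _ two _ qk xq[unfolded X_def]]) (use fd' k1 dk X_def in auto)
  hence "2^(e+1) dvd q^k - 1" using n by simp
  hence "int (2^(e+1)) dvd int (q^k - 1)" by (simp only: int_dvd_int_iff)
  hence d1: "2^(e+1) dvd int q ^ k - 1" using qk by (simp add: of_nat_diff)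
  have "int (q - 1) = int (2^s * u)" using su by simp
  hence d2: "int q - 1 = 2^s * int u" using q1 by (simp add: of_nat_diff)
  have "int (q mod 4) = 1" using q4 by simp
  hence q4': "int q mod 4 = 1" by (simp add: zmod_int)
  have "2^(e+1-s) dvd k" by (rule lte[OF q4' _ d1 d2]) (use k1 su in auto)
  hence "K dvd k" by (simp add: K_def t_def)
  hence kK': "K \<le> k" using k1 by (simp add: dvd_imp_le)
  have kK2: "k = K" using kK kK' by simp
  have te: "t < e" using s2 e1 by (simp add: t_def)
  have "k dvd n" using kK2 te n by (simp add: K_def le_imp_power_dvd)
  moreover have "k < n" using kK2 te n by (simp add: K_def)
  ultimately show ?thesis using k1 r kK2 X_def by auto
qed



lemma sum_group_nat:
  fixes g :: "nat \<Rightarrow> 'b::comm_monoid_add"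
  shows "(\<Sum>i<m*k. g i) = (\<Sum>a<m. \<Sum>j<k. g (a*k+j))"
proof -
  have "(\<Sum>i<m*k. g i) = (\<Sum>a<m. sum g {a*k..<a*k+k})" by (rule sum.nat_group[symmetric])
  also have "\<dots> = (\<Sum>a<m. \<Sum>j<k. g (a*k+j))"
  proof (rule sum.cong[OF refl])
    fix a assume "a \<in> {..<m}"
    have "sum g {0 + a*k..<k + a*k} = (\<Sum>i=0..<k. g (i + a*k))" by (rule sum.shift_bounds_nat_ivl)
    thus "sum g {a*k..<a*k+k} = (\<Sum>j<k. g (a*k+j))" by (simp add: atLeast0LessThan add.commute)
  qed
  finally show ?thesis .
qed

lemma monom_reduce_dvd:
  fixes f :: "'a::field poly"
  assumes "f dvd [:0,1:]^k - [:r:]"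
  shows "f dvd monom c (a*k+j) - monom (r^a * c) j"
proof -
  define X where "X = ([:0,1:]::'a poly)"
  have "X^k - [:r:] dvd (X^k)^a - [:r:]^a" by (metis power_diff_sumr2 dvd_triv_left)
  moreover have "[:r:]^a = [:r^a:]" by (induction a) auto
  ultimately have "f dvd (X^k)^a - [:r^a:]" using assms X_def by (metis dvd_trans)
  hence "f dvd smult c (X^j * ((X^k)^a - [:r^a:]))" by (intro dvd_smult dvd_mult)
  moreover have "smult c (X^j * ((X^k)^a - [:r^a:])) = monom c (a*k+j) - monom (r^a * c) j"
  proof -
    have "(X^k)^a = X^(a*k)" by (simp add: power_mult[symmetric] mult.commute)
    thus ?thesis by (simp add: monom_altdef power_add algebra_simps smult_diff_right X_def)
  qed
  ultimately show ?thesis by simp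
qed

lemma poly_reduce:
  fixes f :: "'a::field poly" and e :: "nat \<Rightarrow> 'a"
  assumes r: "[:0,1:]^k mod f = [:r:]" and n: "n = m * k" and dk: "degree f = k" and k1: "k \<ge> 1"
  shows "(\<Sum>i<n. monom (e i) i) mod f = (\<Sum>j<k. monom (\<Sum>a<m. r^a * e (a*k+j)) j)"
proof -
  have rm: "[:r:] mod f = [:r:]" using k1 dk by (intro mod_poly_less) simp
  have fd: "f dvd [:0,1:]^k - [:r:]" using r rm by (metis mod_eq_dvd_iff)
  define R where "R = (\<Sum>j<k. monom (\<Sum>a<m. r^a * e (a*k+j)) j)"
  have degR: "degree R < k"
  proof -
    have "degree R \<le> k - 1" unfolding R_def
      by (rule degree_le) (auto simp: coeff_sum coeff_monom)
    thus ?thesis using k1 by linarith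
  qed
  have Rm: "R mod f = R" using degR dk by (intro mod_poly_less) simp
  have L: "(\<Sum>i<n. monom (e i) i) = (\<Sum>a<m. \<Sum>j<k. monom (e (a*k+j)) (a*k+j))"
    unfolding n by (rule sum_group_nat)
  have R2: "R = (\<Sum>a<m. \<Sum>j<k. monom (r^a * e (a*k+j)) j)"
    unfolding R_def monom_sum by (rule sum.swap)
  have "(\<Sum>i<n. monom (e i) i) - R = (\<Sum>a<m. \<Sum>j<k. monom (e (a*k+j)) (a*k+j) - monom (r^a * e (a*k+j)) j)"
    unfolding L R2 by (simp add: sum_subtractf)
  moreover have "f dvd (\<Sum>a<m. \<Sum>j<k. monom (e (a*k+j)) (a*k+j) - monom (r^a * e (a*k+j)) j)"
    by (intro dvd_sum monom_reduce_dvd[OF fd])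
  ultimately have "f dvd (\<Sum>i<n. monom (e i) i) - R" by simp
  hence "(\<Sum>i<n. monom (e i) i) mod f = R mod f" by (simp add: mod_eq_dvd_iff)
  thus ?thesis using Rm R_def by simp
qed



lemma prod_group_nat:
  fixes g :: "nat \<Rightarrow> 'b::comm_monoid_mult"
  shows "(\<Prod>i<m*k. g i) = (\<Prod>a<m. \<Prod>j<k. g (a*k+j))"
proof -
  have "(\<Prod>i<m*k. g i) = (\<Prod>a<m. prod g {a*k..<a*k+k})" by (rule prod.nat_group[symmetric])
  also have "\<dots> = (\<Prod>a<m. \<Prod>j<k. g (a*k+j))"
  proof (rule prod.cong[OF refl])
    fix a assume "a \<in> {..<m}"
    have "prod g {0 + a*k..<k + a*k} = (\<Prod>i=0..<k. g (i + a*k))" by (rule prod.shift_bounds_nat_ivl)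
    thus "prod g {a*k..<a*k+k} = (\<Prod>j<k. g (a*k+j))" by (simp add: atLeast0LessThan add.commute)
  qed
  finally show ?thesis .
qed

lemma pmf_map_inj_on_superset:
  assumes "inj_on f S" "set_pmf M \<subseteq> S" "x \<in> S"
  shows "pmf (map_pmf f M) (f x) = pmf M x"
proof (cases "x \<in> set_pmf M")
  case True
  have "inj_on f (set_pmf M)" using assms(1,2) inj_on_subset by blast
  from pmf_map_inj[OF this True] show ?thesis .
next
  case False
  hence "f x \<notin> f ` set_pmf M" using assms by (auto simp: inj_on_def)
  hence "pmf (map_pmf f M) (f x) = 0" by (rule pmf_map_outside)
  moreover have "pmf M x = 0" using False by (simp add: set_pmf_eq)
  ultimately show ?thesis by simp
qed

lemma Pi_pmf_curry:
  fixes p :: "'b pmf" and d :: 'b and n m k :: nat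
  assumes n: "n = m * k"
  shows "Pi_pmf {..<k} (\<lambda>_. d) (\<lambda>_. Pi_pmf {..<m} d (\<lambda>_. p)) =
         map_pmf (\<lambda>e j a. if j < k \<and> a < m then e (a*k+j) else d) (Pi_pmf {..<n} d (\<lambda>_. p))"
    (is "?L = map_pmf ?psi ?M")
proof (rule pmf_eqI)
  fix F :: "nat \<Rightarrow> nat \<Rightarrow> 'b"
  define S where "S = {e::nat \<Rightarrow> 'b. \<forall>i. i \<notin> {..<n} \<longrightarrow> e i = d}"
  have setM: "set_pmf ?M \<subseteq> S" unfolding S_def by (rule set_Pi_pmf_subset) simp
  have divmod: "i div k < m \<and> i mod k < k \<and> (i div k) * k + i mod k = i" if "i < n" for i
  proof -
    have k0: "k > 0" using that n by (cases k) auto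
    have "i div k < m" using that n by (simp add: less_mult_imp_div_less)
    thus ?thesis using k0 by simp
  qed
  have inj: "inj_on ?psi S"
  proof (rule inj_onI)
    fix e e' assume e: "e \<in> S" and e': "e' \<in> S" and eq: "?psi e = ?psi e'"
    show "e = e'"
    proof
      fix i show "e i = e' i"
      proof (cases "i < n")
        case True
        have h: "(if i mod k < k \<and> i div k < m then e (i div k * k + i mod k) else d) = (if i mod k < k \<and> i div k < m then e' (i div k * k + i mod k) else d)"
          using fun_cong[OF fun_cong[OF eq, of "i mod k"], of "i div k"] .
        have A: "i mod k < k \<and> i div k < m" and B: "i div k * k + i mod k = i" using divmod[OF True] by auto
        show ?thesis using h[unfolded if_P[OF A] B] .
      next
        case False thus ?thesis using e e' by (simp add: S_def)
      qed
    qed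
  qed
  show "pmf ?L F = pmf (map_pmf ?psi ?M) F"
  proof (cases "F \<in> ?psi ` S")
    case True
    then obtain e where e: "e \<in> S" and F: "F = ?psi e" by blast
    have "pmf (map_pmf ?psi ?M) F = pmf ?M e" unfolding F by (rule pmf_map_inj_on_superset[OF inj setM e])
    also have "\<dots> = (\<Prod>i<n. pmf p (e i))" using e by (subst pmf_Pi') (auto simp: S_def)
    also have "\<dots> = (\<Prod>a<m. \<Prod>j<k. pmf p (e (a*k+j)))" unfolding n by (rule prod_group_nat)
    also have "\<dots> = (\<Prod>j<k. \<Prod>a<m. pmf p (e (a*k+j)))" by (rule prod.swap)
    also have "\<dots> = pmf ?L F"
    proof -
      have "pmf ?L F = (\<Prod>j<k. pmf (Pi_pmf {..<m} d (\<lambda>_. p)) (F j))"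
        unfolding F by (subst pmf_Pi') auto
      also have "\<dots> = (\<Prod>j<k. \<Prod>a<m. pmf p (e (a*k+j)))"
        unfolding F by (intro prod.cong refl, subst pmf_Pi') auto
      finally show ?thesis by simp
    qed
    finally show ?thesis by simp
  next
    case False
    have "pmf (map_pmf ?psi ?M) F = 0"
      by (rule pmf_map_outside) (use False setM in blast)
    moreover have "pmf ?L F = 0"
    proof (rule ccontr)
      assume "pmf ?L F \<noteq> 0"
      hence FL: "F \<in> set_pmf ?L" by (simp add: set_pmf_eq)
      hence F1: "\<forall>j. j \<ge> k \<longrightarrow> F j = (\<lambda>_. d)" using set_Pi_pmf_subset[of "{..<k}" "\<lambda>_. d" "\<lambda>_. Pi_pmf {..<m} d (\<lambda>_. p)"] by auto
      have F2: "F j a = d" if "j < k" "a \<ge> m" for j a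
      proof -
        have "F j \<in> set_pmf (Pi_pmf {..<m} d (\<lambda>_. p))"
          using FL that set_Pi_pmf_subset'[of "{..<k}" "\<lambda>_. d"] by (auto simp: PiE_dflt_def)
        thus ?thesis using that set_Pi_pmf_subset[of "{..<m}" d "\<lambda>_. p"] by auto
      qed
      define e where "e i = (if i < n then F (i mod k) (i div k) else d)" for i
      have "e \<in> S" by (simp add: S_def e_def)
      moreover have "?psi e = F"
      proof (intro ext)
        fix j a
        show "?psi e j a = F j a"
        proof (cases "j < k \<and> a < m")
          case True
          have "(a+1)*k \<le> m*k" using True by (intro mult_le_mono1) simp
          hence lt: "a*k+j < n" using n True by simp
          have "(a*k+j) mod k = j" "(a*k+j) div k = a" using True by auto
          thus ?thesis using True lt by (simp add: e_def)
        next
          case False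
          thus ?thesis using F1 F2 by (cases "j < k") auto
        qed
      qed
      ultimately show False using False by blast
    qed
    ultimately show ?thesis by simp
  qed
qed



theorem mainTheorem1:
  fixes n q k :: nat and f :: "'a::{field,finite} poly" and chi0 :: "'a pmf"
    and rho :: "'a poly \<Rightarrow> 'a poly" and chi :: "'a poly pmf"
  assumes "\<exists>e. n = 2 ^ e" and "n \<ge> 2"
    and "prime q" and "q mod 4 = 1" and "CARD('a) = q"
    and "f dvd xn1 n" and "irreducible f" and "degree f = k"
    and "rho = (\<lambda>p. p mod f)"
    and "chi = formed_on_basis n (zeta_pow_Rq n) chi0"
  shows "(\<exists>c. rho (zeta_pow_Rq n k) = [:c:])
    \<and> bij_betw (\<lambda>c. \<Sum>j<k. smult (c j) (rho (zeta_pow_Rq n 1) ^ j mod f))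
           ({..<k} \<rightarrow>\<^sub>E UNIV) {p. p mod f = p}
    \<and> map_pmf rho chi =
           formed_on_basis k (\<lambda>j. rho (zeta_pow_Rq n 1) ^ j mod f)
             (map_pmf (\<lambda>X. \<Sum>i<n div k. coeff (rho (zeta_pow_Rq n k)) 0 ^ i * X i)
                (Pi_pmf {..<n div k} 0 (\<lambda>_. chi0)))"
proof -
  obtain e where n: "n = 2^e" using assms(1) by blast
  have st: "k dvd n \<and> k < n \<and> k \<ge> 1 \<and> (\<exists>r. [:0,1:]^k mod f = [:r:])"
    by (rule structure_thm[OF n assms(2) assms(3) assms(4) assms(5) assms(6) assms(7) assms(8)])
  then obtain r where r: "[:0,1:]^k mod f = [:r:]" and kn: "k dvd n" "k < n" and k1: "k \<ge> 1" by blast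
  define X where "X = ([:0,1:]::'a poly)"
  have rho: "rho p = p mod f" for p using assms(9) by simp
  have degX: "degree (X^i) = i" for i unfolding X_def using degree_linear_power[of "0::'a" i] by simp
  have degxn1: "degree (xn1 n :: 'a poly) = n"
  proof -
    have "degree (X^n + 1) = n" using assms(2) degX[of n] by (subst degree_add_eq_left) auto
    thus ?thesis by (simp add: xn1_eq X_def)
  qed
  have zp: "zeta_pow_Rq n i = X^i" if "i < n" for i
    unfolding zeta_pow_Rq_def X_def[symmetric] using that degX degxn1 by (intro mod_poly_less) simp
  have rhok: "rho (zeta_pow_Rq n k) = [:r:]" using zp[OF kn(2)] r rho X_def by simp
  have rho1: "rho (zeta_pow_Rq n 1) = X mod f" using zp[of 1] assms(2) rho by simp
  have B: "rho (zeta_pow_Rq n 1) ^ j mod f = monom 1 j" if "j < k" for j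
  proof -
    have "rho (zeta_pow_Rq n 1) ^ j mod f = X^j mod f" unfolding rho1 by (rule power_mod)
    also have "\<dots> = X^j" using that degX assms(8) by (intro mod_poly_less) simp
    also have "\<dots> = monom 1 j" by (simp add: X_def monom_altdef)
    finally show ?thesis .
  qed
  have B': "rho (zeta_pow_Rq n (Suc 0)) ^ j mod f = monom 1 j" if "j < k" for j
    using B[OF that] by simp
  have P1: "\<exists>c. rho (zeta_pow_Rq n k) = [:c:]" using rhok by blast
  have setf: "{p. p mod f = p} = {p::'a poly. degree p < k}"
  proof (intro equalityI subsetI; clarsimp)
    fix p :: "'a poly" assume "p mod f = p"
    moreover have "f \<noteq> 0" using assms(7) by auto
    ultimately show "degree p < k" using degree_mod_less[of f p] assms(8) k1 by (cases "p = 0") auto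
  next
    fix p :: "'a poly" assume "degree p < k"
    thus "p mod f = p" using assms(8) by (intro mod_poly_less) simp
  qed
  have P2: "bij_betw (\<lambda>c. \<Sum>j<k. smult (c j) (rho (zeta_pow_Rq n 1) ^ j mod f))
           ({..<k} \<rightarrow>\<^sub>E UNIV) {p. p mod f = p}"
  proof -
    have "bij_betw (\<lambda>c. \<Sum>j<k. smult (c j) (rho (zeta_pow_Rq n 1) ^ j mod f)) ({..<k} \<rightarrow>\<^sub>E UNIV) {p. p mod f = p}
        = bij_betw (\<lambda>c. \<Sum>j<k. monom (c j) j) ({..<k} \<rightarrow>\<^sub>E (UNIV::'a set)) {p. p mod f = p}"
      by (intro bij_betw_cong sum.cong refl) (simp add: B B' smult_monom)
    thus ?thesis using coeffs_bij[OF k1, where 'a='a] setf by simp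
  qed
  define m where "m = n div k"
  have nmk: "n = m * k" using kn(1) by (simp add: m_def)
  define M where "M = Pi_pmf {..<n} (0::'a) (\<lambda>_. chi0)"
  define psi where "psi = (\<lambda>(e::nat\<Rightarrow>'a) j a. if j < k \<and> a < m then e (a*k+j) else 0)"
  define h where "h = (\<lambda>X. \<Sum>i<m. r ^ i * X i)"
  define G where "G = (\<lambda>e::nat\<Rightarrow>'a. \<Sum>j<k. monom (\<Sum>a<m. r^a * e (a*k+j)) j)"
  have L: "map_pmf rho chi = map_pmf G M"
  proof -
    have "map_pmf rho chi = map_pmf (\<lambda>e. rho (\<Sum>i<n. smult (e i) (zeta_pow_Rq n i))) M"
      by (simp add: assms(10) formed_on_basis_def M_def map_pmf_comp)
    also have "\<dots> = map_pmf G M"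
    proof (rule map_pmf_cong[OF refl])
      fix e :: "nat \<Rightarrow> 'a"
      have "(\<Sum>i<n. smult (e i) (zeta_pow_Rq n i)) = (\<Sum>i<n. monom (e i) i)"
        by (intro sum.cong refl) (simp add: zp X_def monom_altdef)
      thus "rho (\<Sum>i<n. smult (e i) (zeta_pow_Rq n i)) = G e"
        using poly_reduce[OF r nmk assms(8) k1, of e] by (simp add: rho G_def)
    qed
    finally show ?thesis .
  qed
  have R: "formed_on_basis k (\<lambda>j. rho (zeta_pow_Rq n 1) ^ j mod f)
             (map_pmf (\<lambda>X. \<Sum>i<n div k. coeff (rho (zeta_pow_Rq n k)) 0 ^ i * X i)
                (Pi_pmf {..<n div k} 0 (\<lambda>_. chi0))) = map_pmf G M"
  proof -
    have hh: "(\<lambda>X. \<Sum>i<n div k. coeff (rho (zeta_pow_Rq n k)) 0 ^ i * X i) = h"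
      by (simp add: rhok h_def m_def)
    have "Pi_pmf {..<k} 0 (\<lambda>_. map_pmf h (Pi_pmf {..<m} 0 (\<lambda>_. chi0)))
          = map_pmf (\<lambda>H. h \<circ> H) (Pi_pmf {..<k} (\<lambda>_. 0) (\<lambda>_. Pi_pmf {..<m} 0 (\<lambda>_. chi0)))"
      by (rule Pi_pmf_map) (simp_all add: h_def)
    also have "Pi_pmf {..<k} (\<lambda>_. 0) (\<lambda>_. Pi_pmf {..<m} 0 (\<lambda>_. chi0)) = map_pmf psi M"
      unfolding psi_def M_def by (rule Pi_pmf_curry[OF nmk])
    finally have PP: "Pi_pmf {..<k} 0 (\<lambda>_. map_pmf h (Pi_pmf {..<m} 0 (\<lambda>_. chi0)))
          = map_pmf (\<lambda>e. h \<circ> psi e) M" by (simp add: map_pmf_comp comp_def)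
    have "formed_on_basis k (\<lambda>j. rho (zeta_pow_Rq n 1) ^ j mod f)
             (map_pmf (\<lambda>X. \<Sum>i<n div k. coeff (rho (zeta_pow_Rq n k)) 0 ^ i * X i)
                (Pi_pmf {..<n div k} 0 (\<lambda>_. chi0)))
        = map_pmf (\<lambda>c. \<Sum>j<k. smult (c j) (rho (zeta_pow_Rq n 1) ^ j mod f))
            (Pi_pmf {..<k} 0 (\<lambda>_. map_pmf h (Pi_pmf {..<m} 0 (\<lambda>_. chi0))))"
      unfolding formed_on_basis_def hh m_def ..
    also have "\<dots> = map_pmf (\<lambda>e. \<Sum>j<k. smult ((h \<circ> psi e) j) (rho (zeta_pow_Rq n 1) ^ j mod f)) M"
      unfolding PP by (simp add: map_pmf_comp)
    also have "\<dots> = map_pmf G M"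
    proof (rule map_pmf_cong[OF refl])
      fix e :: "nat \<Rightarrow> 'a"
      show "(\<Sum>j<k. smult ((h \<circ> psi e) j) (rho (zeta_pow_Rq n 1) ^ j mod f)) = G e"
        unfolding G_def
      proof (rule sum.cong[OF refl])
        fix j assume j: "j \<in> {..<k}"
        have "(h \<circ> psi e) j = (\<Sum>a<m. r^a * e (a*k+j))"
          using j by (simp add: h_def psi_def)
        thus "smult ((h \<circ> psi e) j) (rho (zeta_pow_Rq n 1) ^ j mod f) = monom (\<Sum>a<m. r^a * e (a*k+j)) j"
          using B B' j by (simp add: smult_monom)
      qed
    qed
    finally show ?thesis .
  qed
  show ?thesis using P1 P2 L R by simp
qed


end
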